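(* For every $p>1$, $$\mathrm{ZZ}\ \ge\ C_p^{(1)}:=\frac12\int_0^\infty V\Big\{\int_{-\infty}^{\infty}{\rm E}\Big[\big(f_{\phi|\mathbf{x}}(\varphi|\mathbf{x})^{\frac{1}{1-p}}+f_{\phi|\mathbf{x}}(\varphi+h|\mathbf{x})^{\frac{1}{1-p}}\big)^{1-p}\Big]d\varphi\Big\}(h)\,h\,dh$$ and $$\mathrm{ZZ}\ \ge\ C_p^{(2)}:=\frac12\int_0^\infty V\Big\{\int_{-\infty}^{\infty}{\rm E}\Big[f_{\phi|\mathbf{x}}(\varphi|\mathbf{x})+f_{\phi|\mathbf{x}}(\varphi+h|\mathbf{x})-\big(f_{\phi|\mathbf{x}}(\varphi|\mathbf{x})^{\frac{p}{p-1}}+f_{\phi|\mathbf{x}}(\varphi+h|\mathbf{x})^{\frac{p}{p-1}}\big)^{\frac{p-1}{p}}\Big]d\varphi\Big\}(h)\,h\,dh,$$ where the expectations are over the marginal law of $\mathbf{x}$. Consequently, combined with the extended Ziv–Zakai bound ${\rm E}[|\hat\phi(\mathbf{x})-\phi|^2]\ge \mathrm{ZZ}$, every estimator $\hat\phi$ satisfies ${\rm E}[|\hat\phi(\mathbf{x})-\phi|^2]\ge\max(C_p^{(1)},C_p^{(2)})$ for all $p>1$.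
   Context: A continuous scalar random parameter $\phi$ has prior density $f_\phi$, and the observation $\mathbf{x}$ (continuous, with conditional density $f_{\mathbf{x}|\phi}(\mathbf{x}|\varphi)$) has posterior density $f_{\phi|\mathbf{x}}(\cdot|\mathbf{x})$; assume the posterior density is positive. For $\varphi\in\mathbb{R}$, $h>0$, $P_{\min}(\varphi,\varphi+h)$ is the minimum (MAP) probability of error of the binary test $H_0:\mathbf{x}\sim f_{\mathbf{x}|\phi}(\cdot|\varphi)$ versus $H_1:\mathbf{x}\sim f_{\mathbf{x}|\phi}(\cdot|\varphi+h)$ with priors $P(H_0)=\frac{f_\phi(\varphi)}{f_\phi(\varphi)+f_\phi(\varphi+h)}$, $P(H_1)=1-P(H_0)$. The valley-filling operator is $(Vg)(h)=\sup_{\xi\ge0}g(h+\xi)$. The (extended Ziv–Zakai) quantity is $\mathrm{ZZ}=\frac12\int_0^\infty V\big\{\int_{-\infty}^\infty (f_\phi(\varphi)+f_\phi(\varphi+h))P_{\min}(\varphi,\varphi+h)\,d\varphi\big\}(h)\,h\,dh$. *)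

theory Defs
  imports "HOL-Analysis.Analysis"
begin

text \<open>Setting: scalar parameter phi with prior density f (w.r.t. Lebesgue measure on the reals);
observation x in a Euclidean space with conditional density L phi x (w.r.t. Lebesgue measure).\<close>

definition marginal :: "(real \<Rightarrow> real) \<Rightarrow> (real \<Rightarrow> 'a::euclidean_space \<Rightarrow> real) \<Rightarrow> 'a \<Rightarrow> real" where
  "marginal f L x = enn2real (\<integral>\<^sup>+ \<phi>. ennreal (f \<phi> * L \<phi> x) \<partial>lborel)"

definition posterior :: "(real \<Rightarrow> real) \<Rightarrow> (real \<Rightarrow> 'a::euclidean_space \<Rightarrow> real) \<Rightarrow> real \<Rightarrow> 'a \<Rightarrow> real" where
  "posterior f L \<phi> x = f \<phi> * L \<phi> x / marginal f L x"

definition expect_x :: "(real \<Rightarrow> real) \<Rightarrow> (real \<Rightarrow> 'a::euclidean_space \<Rightarrow> real) \<Rightarrow> ('a \<Rightarrow> real) \<Rightarrow> ennreal" where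
  "expect_x f L g = (\<integral>\<^sup>+ x. ennreal (marginal f L x) * ennreal (g x) \<partial>lborel)"

text \<open>Minimum probability of error of the binary test H0: x ~ L phi versus H1: x ~ L (phi+h),
  with priors P(H0) = f phi / (f phi + f (phi+h)), P(H1) = 1 - P(H0); infimum over all
  (measurable) decision regions D on which H1 is decided.\<close>
definition Pmin :: "(real \<Rightarrow> real) \<Rightarrow> (real \<Rightarrow> 'a::euclidean_space \<Rightarrow> real) \<Rightarrow> real \<Rightarrow> real \<Rightarrow> ennreal" where
  "Pmin f L \<phi> h =
     (let p0 = f \<phi> / (f \<phi> + f (\<phi> + h)); p1 = 1 - p0 in
      (INF D \<in> sets (lborel :: 'a measure).
          ennreal p0 * (\<integral>\<^sup>+ x \<in> D. ennreal (L \<phi> x) \<partial>lborel)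
        + ennreal p1 * (\<integral>\<^sup>+ x \<in> (UNIV - D). ennreal (L (\<phi> + h) x) \<partial>lborel)))"

definition Vfill :: "(real \<Rightarrow> ennreal) \<Rightarrow> real \<Rightarrow> ennreal" where
  "Vfill g h = (SUP \<xi> \<in> {0..}. g (h + \<xi>))"

definition ZZ :: "(real \<Rightarrow> real) \<Rightarrow> (real \<Rightarrow> 'a::euclidean_space \<Rightarrow> real) \<Rightarrow> ennreal" where
  "ZZ f L = (1/2) * (\<integral>\<^sup>+ h \<in> {0..}.
      Vfill (\<lambda>h. \<integral>\<^sup>+ \<phi>. ennreal (f \<phi> + f (\<phi> + h)) * Pmin f L \<phi> h \<partial>lborel) h * ennreal h \<partial>lborel)"

definition C1 :: "(real \<Rightarrow> real) \<Rightarrow> (real \<Rightarrow> 'a::euclidean_space \<Rightarrow> real) \<Rightarrow> real \<Rightarrow> ennreal" where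
  "C1 f L p = (1/2) * (\<integral>\<^sup>+ h \<in> {0..}.
      Vfill (\<lambda>h. \<integral>\<^sup>+ \<phi>. expect_x f L (\<lambda>x.
          (posterior f L \<phi> x powr (1 / (1 - p)) + posterior f L (\<phi> + h) x powr (1 / (1 - p))) powr (1 - p))
        \<partial>lborel) h * ennreal h \<partial>lborel)"

definition C2 :: "(real \<Rightarrow> real) \<Rightarrow> (real \<Rightarrow> 'a::euclidean_space \<Rightarrow> real) \<Rightarrow> real \<Rightarrow> ennreal" where
  "C2 f L p = (1/2) * (\<integral>\<^sup>+ h \<in> {0..}.
      Vfill (\<lambda>h. \<integral>\<^sup>+ \<phi>. expect_x f L (\<lambda>x.
          posterior f L \<phi> x + posterior f L (\<phi> + h) x
          - (posterior f L \<phi> x powr (p / (p - 1)) + posterior f L (\<phi> + h) x powr (p / (p - 1))) powr ((p - 1) / p))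
        \<partial>lborel) h * ennreal h \<partial>lborel)"

definition mse :: "(real \<Rightarrow> real) \<Rightarrow> (real \<Rightarrow> 'a::euclidean_space \<Rightarrow> real) \<Rightarrow> ('a \<Rightarrow> real) \<Rightarrow> ennreal" where
  "mse f L est = (\<integral>\<^sup>+ \<phi>. \<integral>\<^sup>+ x. ennreal (f \<phi> * L \<phi> x) * ennreal ((est x - \<phi>)\<^sup>2) \<partial>lborel \<partial>lborel)"

end

theory Submission
  imports Defs
begin

lemma ineq1:
  fixes u v p :: real
  assumes u: "u > 0" and v: "v > 0" and p: "p > 1"
  shows "(u powr (1 / (1 - p)) + v powr (1 / (1 - p))) powr (1 - p) \<le> min u v"
proof -
  define q where "q = 1 / (1 - p)"
  define m where "m = min u v"
  have q: "q \<le> 0" using p by (simp add: q_def)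
  have m: "m > 0" using u v by (simp add: m_def)
  have "u powr q \<le> m powr q" using powr_mono2'[OF q m] u v by (simp add: m_def)
  have "v powr q \<le> m powr q" using powr_mono2'[OF q m] u v by (simp add: m_def)
  have "m powr q \<le> u powr q + v powr q"
    by (cases "u \<le> v") (auto simp: m_def min_def add_increasing add_increasing2)
  moreover have "0 < m powr q" using m by simp
  ultimately have "(u powr q + v powr q) powr (1 - p) \<le> (m powr q) powr (1 - p)"
    using powr_mono2'[of "1-p" "m powr q" "u powr q + v powr q"] p by simp
  also have "\<dots> = m" using p m by (simp add: powr_powr q_def)
  finally show ?thesis by (simp add: q_def m_def)
qed

lemma ineq2:
  fixes u v p :: real
  assumes u: "u \<ge> 0" and v: "v \<ge> 0" and p: "p > 1"
  shows "u + v - (u powr (p / (p - 1)) + v powr (p / (p - 1))) powr ((p - 1) / p) \<le> min u v"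
proof -
  define r where "r = p / (p - 1)"
  have rr: "(p - 1) / p = 1 / r" using p by (simp add: r_def)
  have r: "r > 0" using p by (simp add: r_def)
  have A: "w \<le> (u powr r + v powr r) powr (1 / r)" if w: "w \<ge> 0" "w powr r \<le> u powr r + v powr r" for w
  proof -
    have "w = (w powr r) powr (1/r)" using w r
      by (cases "w = 0") (auto simp: powr_powr)
    also have "\<dots> \<le> (u powr r + v powr r) powr (1/r)"
      using w r by (intro powr_mono2) auto
    finally show ?thesis .
  qed
  have "u \<le> (u powr r + v powr r) powr (1 / r)" using A[of u] u by simp
  moreover have "v \<le> (u powr r + v powr r) powr (1 / r)" using A[of v] v by simp
  ultimately show ?thesis unfolding rr[symmetric] r_def[symmetric] by (simp add: min_def)
qed

lemma marginal_nonneg: "marginal f L x \<ge> 0"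
  by (simp add: marginal_def)

lemma key:
  fixes f :: "real \<Rightarrow> real" and L :: "real \<Rightarrow> 'a::euclidean_space \<Rightarrow> real"
  assumes Lm: "\<And>\<phi>. L \<phi> \<in> borel_measurable lborel"
    and f_nonneg: "\<And>\<phi>. f \<phi> \<ge> 0"
    and L_nonneg: "\<And>\<phi> x. L \<phi> x \<ge> 0"
    and G: "\<And>x. marginal f L x > 0 \<Longrightarrow> G x \<le> min (posterior f L \<phi> x) (posterior f L (\<phi> + h) x)"
  shows "expect_x f L G \<le> ennreal (f \<phi> + f (\<phi> + h)) * Pmin f L \<phi> h"
proof -
  define a where "a = f \<phi>"
  define b where "b = f (\<phi> + h)"
  have a: "a \<ge> 0" and b: "b \<ge> 0" using f_nonneg by (auto simp: a_def b_def)
  define M where "M = (\<lambda>x. min (a * L \<phi> x) (b * L (\<phi> + h) x))"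
  have step1: "expect_x f L G \<le> (\<integral>\<^sup>+ x. ennreal (M x) \<partial>lborel)"
    unfolding expect_x_def
  proof (rule nn_integral_mono)
    fix x
    show "ennreal (marginal f L x) * ennreal (G x) \<le> ennreal (M x)"
    proof (cases "marginal f L x > 0")
      case False
      then have "marginal f L x = 0" using marginal_nonneg[of f L x] by linarith
      then show ?thesis by simp
    next
      case True
      have "ennreal (marginal f L x) * ennreal (G x) = ennreal (marginal f L x * G x)"
        using True by (simp add: ennreal_mult')
      also have "\<dots> \<le> ennreal (M x)"
      proof (rule ennreal_leI)
        have "marginal f L x * G x \<le> marginal f L x * min (posterior f L \<phi> x) (posterior f L (\<phi> + h) x)"
          using G[OF True] True by (intro mult_left_mono) auto
        also have "\<dots> = M x"
          using True by (simp add: M_def posterior_def a_def b_def min_mult_distrib_left)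
        finally show "marginal f L x * G x \<le> M x" .
      qed
      finally show ?thesis .
    qed
  qed
  have step2: "(\<integral>\<^sup>+ x. ennreal (M x) \<partial>lborel) \<le> ennreal (a + b) * Pmin f L \<phi> h"
  proof (cases "a + b = 0")
    case True
    then have "a = 0" "b = 0" using a b by auto
    then show ?thesis by (simp add: M_def)
  next
    case False
    then have c: "a + b > 0" using a b by linarith
    define c where "c = a + b"
    have perD: "(\<integral>\<^sup>+ x. ennreal (M x) \<partial>lborel) \<le>
        ennreal c * (ennreal (a / c) * (\<integral>\<^sup>+ x \<in> D. ennreal (L \<phi> x) \<partial>lborel)
        + ennreal (1 - a / c) * (\<integral>\<^sup>+ x \<in> (UNIV - D). ennreal (L (\<phi> + h) x) \<partial>lborel))"
      if D: "D \<in> sets lborel" for D :: "'a set"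
    proof -
      have e1: "ennreal c * ennreal (a / c) = ennreal a"
        using c a by (simp add: c_def ennreal_mult''[symmetric])
      have "1 - a / c = b / c" using c by (simp add: c_def field_simps)
      then have e2: "ennreal c * ennreal (1 - a / c) = ennreal b"
        using c b by (simp add: c_def ennreal_mult''[symmetric])
      have "(\<integral>\<^sup>+ x. ennreal (M x) \<partial>lborel) \<le>
          (\<integral>\<^sup>+ x. ennreal a * (ennreal (L \<phi> x) * indicator D x)
              + ennreal b * (ennreal (L (\<phi> + h) x) * indicator (UNIV - D) x) \<partial>lborel)"
      proof (rule nn_integral_mono)
        fix x
        show "ennreal (M x) \<le> ennreal a * (ennreal (L \<phi> x) * indicator D x)
              + ennreal b * (ennreal (L (\<phi> + h) x) * indicator (UNIV - D) x)"
          using a b L_nonneg[of \<phi> x] L_nonneg[of "\<phi>+h" x]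
          by (cases "x \<in> D") (auto simp: M_def ennreal_mult[symmetric] intro!: ennreal_leI)
      qed
      also have "\<dots> = ennreal a * (\<integral>\<^sup>+ x \<in> D. ennreal (L \<phi> x) \<partial>lborel)
          + ennreal b * (\<integral>\<^sup>+ x \<in> (UNIV - D). ennreal (L (\<phi> + h) x) \<partial>lborel)"
        using D Lm by (subst nn_integral_add) (auto simp: nn_integral_cmult)
      also have "\<dots> = ennreal c * (ennreal (a / c) * (\<integral>\<^sup>+ x \<in> D. ennreal (L \<phi> x) \<partial>lborel)
        + ennreal (1 - a / c) * (\<integral>\<^sup>+ x \<in> (UNIV - D). ennreal (L (\<phi> + h) x) \<partial>lborel))"
        by (simp add: distrib_left mult.assoc[symmetric] e1 e2)
      finally show ?thesis .
    qed
    define I where "I = (\<integral>\<^sup>+ x. ennreal (M x) \<partial>lborel)"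
    have inv: "ennreal c * ennreal (1 / c) = 1" using c
      by (simp add: c_def ennreal_mult''[symmetric])
    have "ennreal (1 / c) * I \<le> Pmin f L \<phi> h"
      unfolding Pmin_def Let_def a_def[symmetric] b_def[symmetric] c_def[symmetric]
    proof (rule INF_greatest)
      fix D :: "'a set" assume D: "D \<in> sets lborel"
      have "ennreal (1 / c) * I \<le> ennreal (1 / c) * (ennreal c * (ennreal (a / c) * (\<integral>\<^sup>+ x \<in> D. ennreal (L \<phi> x) \<partial>lborel)
        + ennreal (1 - a / c) * (\<integral>\<^sup>+ x \<in> (UNIV - D). ennreal (L (\<phi> + h) x) \<partial>lborel)))"
        using perD[OF D] unfolding I_def by (rule mult_left_mono) simp
      also have "\<dots> = ennreal (a / c) * (\<integral>\<^sup>+ x \<in> D. ennreal (L \<phi> x) \<partial>lborel)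
        + ennreal (1 - a / c) * (\<integral>\<^sup>+ x \<in> (UNIV - D). ennreal (L (\<phi> + h) x) \<partial>lborel)"
        by (simp add: mult.assoc[symmetric] inv mult.commute[of "ennreal (1/c)"])
      finally show "ennreal (1 / c) * I \<le> ennreal (a / c) * (\<integral>\<^sup>+ x \<in> D. ennreal (L \<phi> x) \<partial>lborel)
        + ennreal (1 - a / c) * (\<integral>\<^sup>+ x \<in> (UNIV - D). ennreal (L (\<phi> + h) x) \<partial>lborel)" .
    qed
    then have "ennreal c * (ennreal (1 / c) * I) \<le> ennreal c * Pmin f L \<phi> h"
      by (rule mult_left_mono) simp
    then show ?thesis by (simp add: I_def c_def[symmetric] mult.assoc[symmetric] inv)
  qed
  show ?thesis using step1 step2 by (simp add: a_def b_def)
qed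

lemma outer_mono:
  assumes "\<And>h \<phi>. F h \<phi> \<le> G h \<phi>"
  shows "(1/2::ennreal) * (\<integral>\<^sup>+ h \<in> {0..}. Vfill (\<lambda>h. \<integral>\<^sup>+ \<phi>. F h \<phi> \<partial>lborel) h * ennreal h \<partial>lborel)
       \<le> (1/2) * (\<integral>\<^sup>+ h \<in> {0..}. Vfill (\<lambda>h. \<integral>\<^sup>+ \<phi>. G h \<phi> \<partial>lborel) h * ennreal h \<partial>lborel)"
proof -
  have "(SUP \<xi>\<in>{0..}. integral\<^sup>N lborel (F (x + \<xi>))) \<le> (SUP \<xi>\<in>{0..}. integral\<^sup>N lborel (G (x + \<xi>)))" for x :: real
    by (intro SUP_mono' nn_integral_mono assms order_refl)
  then show ?thesis unfolding Vfill_def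
    by (intro mult_left_mono nn_integral_mono mult_right_mono) auto
qed

theorem mainTheorem10:
  fixes f :: "real \<Rightarrow> real" and L :: "real \<Rightarrow> 'a::euclidean_space \<Rightarrow> real" and p :: real
  assumes f_meas: "f \<in> borel_measurable lborel"
    and f_nonneg: "\<And>\<phi>. f \<phi> \<ge> 0"
    and f_dens: "(\<integral>\<^sup>+ \<phi>. ennreal (f \<phi>) \<partial>lborel) = 1"
    and L_meas: "(\<lambda>(\<phi>, x). L \<phi> x) \<in> borel_measurable (lborel \<Otimes>\<^sub>M lborel)"
    and L_nonneg: "\<And>\<phi> x. L \<phi> x \<ge> 0"
    and L_dens: "\<And>\<phi>. (\<integral>\<^sup>+ x. ennreal (L \<phi> x) \<partial>lborel) = 1"
    and post_pos: "\<And>\<phi> x. marginal f L x > 0 \<Longrightarrow> posterior f L \<phi> x > 0"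
    and p: "p > 1"
  shows "ZZ f L \<ge> C1 f L p \<and> ZZ f L \<ge> C2 f L p \<and>
         (\<forall>est :: 'a \<Rightarrow> real. est \<in> borel_measurable lborel \<longrightarrow> mse f L est \<ge> ZZ f L
            \<longrightarrow> mse f L est \<ge> max (C1 f L p) (C2 f L p))"
proof -
  have Lm: "L \<phi> \<in> borel_measurable lborel" for \<phi>
  proof -
    have "(\<lambda>x. (\<lambda>(\<phi>, x). L \<phi> x) (\<phi>, x)) \<in> borel_measurable lborel"
      by (rule measurable_compose[OF measurable_Pair1' L_meas]) simp
    then show ?thesis by (simp add: fun_eq_iff)
  qed
  have posnn: "posterior f L \<phi> x \<ge> 0" for \<phi> x
    using f_nonneg L_nonneg marginal_nonneg[of f L x] by (simp add: posterior_def)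
  have c1: "C1 f L p \<le> ZZ f L"
    unfolding C1_def ZZ_def
    by (rule outer_mono, rule key[OF Lm f_nonneg L_nonneg], rule ineq1[OF post_pos post_pos p])
  have c2: "C2 f L p \<le> ZZ f L"
    unfolding C2_def ZZ_def
    by (rule outer_mono, rule key[OF Lm f_nonneg L_nonneg], rule ineq2[OF posnn posnn p])
  show ?thesis using c1 c2 by (auto intro: order_trans)
qed

end
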